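(* Fix $\alpha\in\mathcal A$ and a constant $c>0$. Assume that there exists a nondegenerate $m\times m$ matrix $A_c^*(\alpha)$ solving, with respect to the matrix $A$, the equation $$\int_0^t \psi_c^A(s,Y^0(\alpha);\alpha)\,[\dot a(s,Y^0(\alpha);\alpha)]'\,ds=\mathrm{Id},$$ where $\psi_c^A:=h_c(A\dot a)$. Then $\psi_c^*:=\psi_c^{A_c^*(\alpha)}=h_c(A_c^*(\alpha)\dot a)$ solves the following optimization problem: minimize $$\operatorname{tr}\int_0^t \psi(s,Y^0(\alpha);\alpha)[\psi(s,Y^0(\alpha);\alpha)]'\,ds$$ over $\psi\in\Psi_{0,c}$, i.e. over $\psi\in\Psi_0$ subject to the side conditions $\int_0^t \psi(s,Y^0(\alpha);\alpha)[\dot a(s,Y^0(\alpha);\alpha)]'ds=\mathrm{Id}$ and $\sup_{0\le s\le t}|\psi(s,Y^0(\alpha);\alpha)|\le c$. That is, $\psi_c^*$ satisfies both side conditions, and for every such $\psi$ the trace of $\int_0^t\psi_c^*(\psi_c^* )'ds$ (along $Y^0(\alpha)$) is at most that of $\int_0^t\psi\psi'ds$.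
   Context: Fix $t>0$ and an open set $\mathcal A\subset\mathbb R^m$, $m\ge1$. Let $C_t$ be the space of continuous functions $x=(x_s)_{0\le s\le t}$ with $\mathcal B_s=\sigma(x_u,u\le s)$. Let $a:[0,t]\times C_t\times\mathcal A\to\mathbb R$ be nonanticipative (i.e. $a(s,\cdot;\alpha)$ is $\mathcal B_s$-measurable), satisfying for constants $L_1,L_2$ independent of $\alpha$ and a nondecreasing right-continuous $k$ with $0\le k(s)\le k_0<\infty$: $|a(s,x^1;\alpha)-a(s,x^2;\alpha)|\le L_1\int_0^s|x^1_u-x^2_u|dk_u+L_2|x^1_s-x^2_s|$ and $|a(s,x;\alpha)|\le L_1\int_0^s(1+|x_u|)dk_u+L_2(1+|x_s|)$; assume $a$ is differentiable in $\alpha$ with gradient $\dot a=(\partial a/\partial\alpha_1,\dots,\partial a/\partial\alpha_m)'$. $Y^0(\alpha)$ denotes the solution of $dY_s=a(s,Y;\alpha)ds$, $Y_0=0$. For $\varepsilon>0$, $P^\varepsilon_\alpha$ is the law on $C_t$ of the solution of $dX_s=a_\varepsilon(s,X;\alpha)ds+dw_s$, $X_0=0$, where $a_\varepsilon(s,x;\alpha)=\varepsilon^{-1}a(s,\varepsilon x;\alpha)$ and $w$ is a Wiener process; $X$ is the coordinate process. The class $\Psi$ consists of nonanticipative $\psi:[0,t]\times C_t\times\mathcal A\to\mathbb R^m$ such that for each $\alpha$ and $\varepsilon>0$: $E^\varepsilon_\alpha\int_0^t|\psi(s,X;\alpha)|^2ds<\infty$; $\int_0^t|\psi(s,Y^0(\alpha);\alpha)|^2ds<\infty$;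 and, uniformly in $\alpha$ on compacts, $\int_0^t|\psi(s,\varepsilon X;\alpha)-\psi(s,Y^0(\alpha);\alpha)|^2ds\to0$ in $P^\varepsilon_\alpha$-probability as $\varepsilon\to0$. $\Psi_0\subset\Psi$ consists of $\psi$ with $\operatorname{rank}\Gamma_0^\psi(\alpha)=\operatorname{rank}\gamma_0^\psi(\alpha)=m$ for all $\alpha$, where $\Gamma_0^\psi(\alpha)=\int_0^t\psi(s,Y^0(\alpha);\alpha)\psi(s,Y^0(\alpha);\alpha)'ds$ and $\gamma_0^\psi(\alpha)=\int_0^t\psi(s,Y^0(\alpha);\alpha)\dot a(s,Y^0(\alpha);\alpha)'ds$. It is assumed that $\dot a\in\Psi_0$. The Huber function is $h_c(z)=z\min(1,c/|z|)$ for $z\in\mathbb R^m$, $|\cdot|$ the Euclidean norm; $'$ denotes transposition. *)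

theory Defs
  imports "HOL-Analysis.Analysis"
begin

text \<open>Paths in C_t are modelled as functions real => real that are continuous on {0..t}.
Vectors in R^m are real^'m, m x m matrices are real^'m^'m.\<close>

definition huber :: "real \<Rightarrow> real^'m \<Rightarrow> real^'m" where
  "huber c z = min 1 (c / norm z) *\<^sub>R z"

definition outer :: "real^'m \<Rightarrow> real^'m \<Rightarrow> real^'m^'m" where
  "outer v w = (\<chi> i j. v $ i * w $ j)"

text \<open>Nonanticipative functional on [0,t] x C_t x A: the value at time s depends on the
path only through its restriction to [0,s] (B_s-measurability).\<close>
definition nonanticipative :: "real \<Rightarrow> (real \<Rightarrow> (real \<Rightarrow> real) \<Rightarrow> 'p \<Rightarrow> 'b) \<Rightarrow> bool" where
  "nonanticipative t f \<longleftrightarrow>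
     (\<forall>s\<in>{0..t}. \<forall>x1 x2 p. (\<forall>u\<in>{0..s}. x1 u = x2 u) \<longrightarrow> f s x1 p = f s x2 p)"

text \<open>Square integrability of a vector function on [0,t] (deterministic part of the class Psi).\<close>
definition sq_integrable_on :: "(real \<Rightarrow> real^'m) \<Rightarrow> real \<Rightarrow> bool" where
  "sq_integrable_on g t \<longleftrightarrow> g measurable_on {0..t} \<and> (\<lambda>s. (norm (g s))\<^sup>2) integrable_on {0..t}"

definition Gamma0 :: "real \<Rightarrow> (real \<Rightarrow> (real \<Rightarrow> real) \<Rightarrow> 'p \<Rightarrow> real^'m) \<Rightarrow> (real \<Rightarrow> real) \<Rightarrow> 'p \<Rightarrow> real^'m^'m" where
  "Gamma0 t psi y p = integral {0..t} (\<lambda>s. outer (psi s y p) (psi s y p))"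

definition gamma0 :: "real \<Rightarrow> (real \<Rightarrow> (real \<Rightarrow> real) \<Rightarrow> 'p \<Rightarrow> real^'m)
     \<Rightarrow> (real \<Rightarrow> (real \<Rightarrow> real) \<Rightarrow> 'p \<Rightarrow> real^'m) \<Rightarrow> (real \<Rightarrow> real) \<Rightarrow> 'p \<Rightarrow> real^'m^'m" where
  "gamma0 t psi adot y p = integral {0..t} (\<lambda>s. outer (psi s y p) (adot s y p))"

end

theory Submission
  imports Defs
begin



lemma lin_int:
  fixes F :: "real \<Rightarrow> real^'m^'m" and B :: "real^'m^'m"
  assumes "F integrable_on S"
  shows "((\<lambda>s. \<Sum>i\<in>UNIV. \<Sum>j\<in>UNIV. B$i$j * F s $i$j) has_integral
           (\<Sum>i\<in>UNIV. \<Sum>j\<in>UNIV. B$i$j * integral S F $i$j)) S"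
proof -
  have lin: "linear (\<lambda>M::real^'m^'m. \<Sum>i\<in>UNIV. \<Sum>j\<in>UNIV. B$i$j * M$i$j)"
    by (auto simp: linear_iff sum.distrib algebra_simps sum_distrib_left)
  hence "bounded_linear (\<lambda>M::real^'m^'m. \<Sum>i\<in>UNIV. \<Sum>j\<in>UNIV. B$i$j * M$i$j)"
    using linear_conv_bounded_linear by blast
  from has_integral_linear[OF integrable_integral[OF assms] this] show ?thesis
    by (simp add: o_def)
qed

lemma mat1_sum: "(\<Sum>j\<in>UNIV. (mat 1::real^'m^'m)$i$j * f j) = f i"
proof -
  have "(\<Sum>j\<in>UNIV. (mat 1::real^'m^'m)$i$j * f j) = (\<Sum>j\<in>UNIV. if i = j then f j else 0)"
    by (rule sum.cong) (auto simp: mat_def)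
  also have "\<dots> = f i" by simp
  finally show ?thesis .
qed

lemma trace_as_sum: "trace (M::real^'m^'m) = (\<Sum>i\<in>UNIV. \<Sum>j\<in>UNIV. mat 1$i$j * M$i$j)"
  by (simp add: trace_def mat1_sum)

lemma trace_outer: "(\<Sum>i\<in>UNIV. \<Sum>j\<in>UNIV. mat 1$i$j * outer v v $i$j) = (norm (v::real^'m))^2"
  by (simp add: outer_def mat1_sum power2_norm_eq_inner inner_vec_def)

lemma inner_outer: "(A *v a) \<bullet> (x::real^'m) = (\<Sum>i\<in>UNIV. \<Sum>j\<in>UNIV. A$i$j * outer x a $i$j)"
  by (simp add: outer_def inner_vec_def matrix_vector_mult_def sum_distrib_left sum_distrib_right algebra_simps)

lemma huber_norm: assumes "c > 0" shows "norm (huber c z) \<le> c"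
proof (cases "z = 0")
  case True thus ?thesis using assms by (simp add: huber_def)
next
  case False
  hence "norm (huber c z) = min 1 (c / norm z) * norm z" using assms by (simp add: huber_def abs_of_nonneg)
  also have "\<dots> \<le> (c / norm z) * norm z" by (intro mult_right_mono) auto
  also have "\<dots> = c" using False by simp
  finally show ?thesis .
qed

lemma huber_ineq:
  fixes v z :: "real^'m"
  assumes "c > 0" "norm v \<le> c"
  shows "2 * (z \<bullet> (v - huber c z)) \<le> (norm v)^2 - (norm (huber c z))^2"
proof (cases "norm z \<le> c")
  case True
  hence "huber c z = z"
  proof (cases "z = 0")
    case False with True assms show ?thesis by (simp add: huber_def min_def field_simps)
  qed (simp add: huber_def)
  moreover have "0 \<le> (norm (v - z))^2" by simp
  ultimately show ?thesis
    by (simp add: power2_norm_eq_inner inner_diff_left inner_diff_right inner_commute algebra_simps)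
next
  case False
  hence zn: "norm z > c" "z \<noteq> 0" using assms by auto
  hence h: "huber c z = (c / norm z) *\<^sub>R z" by (simp add: huber_def min_def field_simps)
  have nh: "norm (huber c z) = c" using zn assms h by simp
  have zh: "z \<bullet> huber c z = c * norm z" using zn h
    by (simp add: power2_norm_eq_inner[symmetric] power2_eq_square)
  have zv: "z \<bullet> v \<le> norm z * norm v" by (rule norm_cauchy_schwarz)
  have "0 \<le> (c - norm v) * (2 * norm z - norm v - c)" using zn assms
    by (intro mult_nonneg_nonneg) auto
  thus ?thesis using nh zh zv by (simp add: inner_diff_right algebra_simps power2_eq_square)
qed

lemma outer00: "outer 0 0 = (0::real^'m^'m)"
  by (simp add: outer_def vec_eq_iff)

lemma cont_outer: "continuous_on UNIV (\<lambda>v::real^'m. outer v v)"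
  unfolding outer_def
  by (intro continuous_on_vec_lambda continuous_intros)

lemma outer_bound: "norm (outer v v) \<le> real CARD('m) * real CARD('m) * (norm (v::real^'m))^2"
proof -
  have "norm (outer v v) \<le> (\<Sum>i\<in>UNIV. norm (outer v v $ i))" unfolding norm_vec_def by (rule L2_set_le_sum) auto
  also have "\<dots> \<le> (\<Sum>i\<in>(UNIV::'m set). real CARD('m) * (norm v)^2)"
  proof (rule sum_mono)
    fix i
    have "norm (outer v v $ i) \<le> (\<Sum>j\<in>UNIV. \<bar>outer v v $ i $ j\<bar>)"
      using norm_le_l1_cart[of "outer v v $ i"] by simp
    also have "\<dots> \<le> (\<Sum>j\<in>(UNIV::'m set). (norm v)^2)"
    proof (rule sum_mono)
      fix j
      have "\<bar>v$i\<bar> \<le> norm v" "\<bar>v$j\<bar> \<le> norm v" by (simp_all add: component_le_norm_cart)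
      thus "\<bar>outer v v $ i $ j\<bar> \<le> (norm v)^2"
        by (simp add: outer_def abs_mult power2_eq_square mult_mono)
    qed
    finally show "norm (outer v v $ i) \<le> real CARD('m) * (norm v)^2" by simp
  qed
  finally show ?thesis by simp
qed


lemma T1: fixes f :: "real \<Rightarrow> real^'m" assumes fm: "f measurable_on S"
  shows "(\<lambda>s. outer (f s) (f s)) measurable_on S"
proof -
  have "((\<lambda>v. outer v v) \<circ> f) measurable_on S"
    by (rule measurable_on_compose_continuous_0[OF fm cont_outer outer00])
  thus ?thesis by (simp add: o_def)
qed
lemma T2: fixes f :: "real \<Rightarrow> real^'m" assumes fm: "f measurable_on {0..t}"
  and b: "\<forall>s\<in>{0..t}. norm (f s) \<le> c"
  shows "(\<lambda>s. outer (f s) (f s)) integrable_on {0..t}"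
proof (rule measurable_bounded_by_integrable_imp_integrable)
  show "(\<lambda>s. outer (f s) (f s)) \<in> borel_measurable (lebesgue_on {0..t})"
    by (rule measurable_on_iff_borel_measurable[THEN iffD1, OF _ T1[OF fm]]) simp
  show "(\<lambda>s. real CARD('m) * real CARD('m) * c^2) integrable_on {0..t}" by (rule integrable_on_const) simp
  show "norm (outer (f s) (f s)) \<le> real CARD('m) * real CARD('m) * c^2" if "s \<in> {0..t}" for s
  proof -
    have "(norm (f s))^2 \<le> c^2" using b that by (simp add: power_mono)
    hence "real CARD('m) * real CARD('m) * (norm (f s))^2 \<le> real CARD('m) * real CARD('m) * c^2"
      by (intro mult_left_mono) simp_all
    thus ?thesis using outer_bound[of "f s"] by linarith
  qed
  show "{0..t} \<in> sets lebesgue" by simp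
qed

theorem theorem2p1:
  fixes t c L1 L2 k0 :: real
    and k :: "real \<Rightarrow> real"
    and AA :: "(real^'m) set"
    and a :: "real \<Rightarrow> (real \<Rightarrow> real) \<Rightarrow> real^'m \<Rightarrow> real"
    and adot :: "real \<Rightarrow> (real \<Rightarrow> real) \<Rightarrow> real^'m \<Rightarrow> real^'m"
    and Y0 :: "real^'m \<Rightarrow> real \<Rightarrow> real"
    and alpha :: "real^'m"
    and Astar :: "real^'m^'m"
  assumes t_pos: "t > 0"
    and AA_open: "open AA"
    and k_mono: "mono k" and k_rcont: "\<forall>u. continuous (at_right u) k"
    and k_bnd: "\<forall>u. 0 \<le> k u \<and> k u \<le> k0"
    and a_nonant: "nonanticipative t a"
    and a_lip: "\<forall>\<beta>\<in>AA. \<forall>s\<in>{0..t}. \<forall>x1 x2. continuous_on {0..t} x1 \<longrightarrow> continuous_on {0..t} x2 \<longrightarrow>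
        \<bar>a s x1 \<beta> - a s x2 \<beta>\<bar> \<le> L1 * (LINT u:{0..s}|interval_measure k. \<bar>x1 u - x2 u\<bar>) + L2 * \<bar>x1 s - x2 s\<bar>"
    and a_growth: "\<forall>\<beta>\<in>AA. \<forall>s\<in>{0..t}. \<forall>x. continuous_on {0..t} x \<longrightarrow>
        \<bar>a s x \<beta>\<bar> \<le> L1 * (LINT u:{0..s}|interval_measure k. 1 + \<bar>x u\<bar>) + L2 * (1 + \<bar>x s\<bar>)"
    and a_diff: "\<forall>\<beta>\<in>AA. \<forall>s\<in>{0..t}. \<forall>x. continuous_on {0..t} x \<longrightarrow>
        ((\<lambda>\<gamma>. a s x \<gamma>) has_derivative (\<lambda>h. adot s x \<beta> \<bullet> h)) (at \<beta>)"
    and Y0_cont: "\<forall>\<beta>\<in>AA. continuous_on {0..t} (Y0 \<beta>)"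
    and Y0_ode: "\<forall>\<beta>\<in>AA. \<forall>s\<in>{0..t}. Y0 \<beta> s = integral {0..s} (\<lambda>u. a u (Y0 \<beta>) \<beta>)"
    and adot_nonant: "nonanticipative t adot"
    and adot_sq: "\<forall>\<beta>\<in>AA. sq_integrable_on (\<lambda>s. adot s (Y0 \<beta>) \<beta>) t"
    and adot_rank: "\<forall>\<beta>\<in>AA. rank (Gamma0 t adot (Y0 \<beta>) \<beta>) = CARD('m)
        \<and> rank (gamma0 t adot adot (Y0 \<beta>) \<beta>) = CARD('m)"
    and alpha_in: "alpha \<in> AA"
    and c_pos: "c > 0"
    and Astar_inv: "invertible Astar"
    and Astar_eq: "integral {0..t} (\<lambda>s. outer (huber c (Astar *v adot s (Y0 alpha) alpha))
        (adot s (Y0 alpha) alpha)) = mat 1"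
  shows "gamma0 t (\<lambda>s x \<beta>. huber c (Astar *v adot s x \<beta>)) adot (Y0 alpha) alpha = mat 1
    \<and> (\<forall>s\<in>{0..t}. norm (huber c (Astar *v adot s (Y0 alpha) alpha)) \<le> c)
    \<and> (\<forall>psi :: real \<Rightarrow> (real \<Rightarrow> real) \<Rightarrow> real^'m \<Rightarrow> real^'m.
         nonanticipative t psi
         \<and> sq_integrable_on (\<lambda>s. psi s (Y0 alpha) alpha) t
         \<and> rank (Gamma0 t psi (Y0 alpha) alpha) = CARD('m)
         \<and> rank (gamma0 t psi adot (Y0 alpha) alpha) = CARD('m)
         \<and> gamma0 t psi adot (Y0 alpha) alpha = mat 1
         \<and> (\<forall>s\<in>{0..t}. norm (psi s (Y0 alpha) alpha) \<le> c)
         \<longrightarrow> trace (Gamma0 t (\<lambda>s x \<beta>. huber c (Astar *v adot s x \<beta>)) (Y0 alpha) alpha)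
             \<le> trace (Gamma0 t psi (Y0 alpha) alpha))"
  proof -
  let ?a = "\<lambda>s. adot s (Y0 alpha) alpha"
  let ?g = "\<lambda>s. huber c (Astar *v ?a s)"
  have g1: "gamma0 t (\<lambda>s x \<beta>. huber c (Astar *v adot s x \<beta>)) adot (Y0 alpha) alpha = mat 1"
    using Astar_eq by (simp add: gamma0_def)
  have g2: "\<forall>s\<in>{0..t}. norm (?g s) \<le> c" using huber_norm[OF c_pos] by blast
  have m1: "(mat 1 :: real^'m^'m) \<noteq> 0"
  proof
    assume "(mat 1 :: real^'m^'m) = 0"
    hence "(mat 1 :: real^'m^'m) $ undefined $ undefined = 0" by simp
    thus False by (simp add: mat_def)
  qed
  have ig: "(\<lambda>s. outer (?g s) (?a s)) integrable_on {0..t}"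
  proof (rule ccontr)
    assume "\<not> ?thesis"
    hence "integral {0..t} (\<lambda>s. outer (?g s) (?a s)) = 0" by (rule not_integrable_integral)
    with Astar_eq m1 show False by simp
  qed
  have g3: "trace (Gamma0 t (\<lambda>s x \<beta>. huber c (Astar *v adot s x \<beta>)) (Y0 alpha) alpha)
             \<le> trace (Gamma0 t psi (Y0 alpha) alpha)"
    if psi_sq: "sq_integrable_on (\<lambda>s. psi s (Y0 alpha) alpha) t"
      and psi_g: "gamma0 t psi adot (Y0 alpha) alpha = mat 1"
      and psi_b: "\<forall>s\<in>{0..t}. norm (psi s (Y0 alpha) alpha) \<le> c" for psi
  proof -
    let ?f = "\<lambda>s. psi s (Y0 alpha) alpha"
    have iff: "(\<lambda>s. outer (?f s) (?a s)) integrable_on {0..t}"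
    proof (rule ccontr)
      assume "\<not> ?thesis"
      hence "integral {0..t} (\<lambda>s. outer (?f s) (?a s)) = 0" by (rule not_integrable_integral)
      with psi_g m1 show False by (simp add: gamma0_def)
    qed
    have fm: "?f measurable_on {0..t}" using psi_sq by (simp add: sq_integrable_on_def)
    have ffi: "(\<lambda>s. outer (?f s) (?f s)) integrable_on {0..t}"
      by (rule T2[OF fm psi_b])
    have trf: "trace (Gamma0 t psi (Y0 alpha) alpha) = integral {0..t} (\<lambda>s. (norm (?f s))^2)"
      and fi2: "(\<lambda>s. (norm (?f s))^2) integrable_on {0..t}"
      using lin_int[OF ffi, of "mat 1"] by (auto simp: Gamma0_def trace_as_sum trace_outer has_integral_iff)
    show ?thesis
    proof (cases "(\<lambda>s. outer (?g s) (?g s)) integrable_on {0..t}")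
      case False
      hence "trace (Gamma0 t (\<lambda>s x \<beta>. huber c (Astar *v adot s x \<beta>)) (Y0 alpha) alpha) = 0"
        by (simp add: Gamma0_def not_integrable_integral trace_def)
      moreover have "0 \<le> integral {0..t} (\<lambda>s. (norm (?f s))^2)"
        by (rule integral_nonneg[OF fi2]) auto
      ultimately show ?thesis using trf by simp
    next
      case True
      have trg: "trace (Gamma0 t (\<lambda>s x \<beta>. huber c (Astar *v adot s x \<beta>)) (Y0 alpha) alpha)
                 = integral {0..t} (\<lambda>s. (norm (?g s))^2)"
        and gi2: "(\<lambda>s. (norm (?g s))^2) integrable_on {0..t}"
        using lin_int[OF True, of "mat 1"] by (auto simp: Gamma0_def trace_as_sum trace_outer has_integral_iff)
      have h1: "((\<lambda>s. (Astar *v ?a s) \<bullet> ?f s) has_integral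
                 (\<Sum>i\<in>UNIV. \<Sum>j\<in>UNIV. Astar$i$j * (mat 1::real^'m^'m) $i$j)) {0..t}"
        using lin_int[OF iff, of Astar] psi_g by (simp add: inner_outer gamma0_def)
      have h2: "((\<lambda>s. (Astar *v ?a s) \<bullet> ?g s) has_integral
                 (\<Sum>i\<in>UNIV. \<Sum>j\<in>UNIV. Astar$i$j * (mat 1::real^'m^'m) $i$j)) {0..t}"
        using lin_int[OF ig, of Astar] Astar_eq by (simp add: inner_outer)
      have hQ: "((\<lambda>s. 2 * ((Astar *v ?a s) \<bullet> (?f s - ?g s))) has_integral 0) {0..t}"
        using has_integral_mult_right[OF has_integral_diff[OF h1 h2], of 2]
        by (simp add: inner_diff_right)
      have "integral {0..t} (\<lambda>s. 2 * ((Astar *v ?a s) \<bullet> (?f s - ?g s)))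
            \<le> integral {0..t} (\<lambda>s. (norm (?f s))^2 - (norm (?g s))^2)"
      proof (rule integral_le)
        show "(\<lambda>s. 2 * ((Astar *v ?a s) \<bullet> (?f s - ?g s))) integrable_on {0..t}"
          using hQ by (rule has_integral_integrable)
        show "(\<lambda>s. (norm (?f s))^2 - (norm (?g s))^2) integrable_on {0..t}"
          by (rule integrable_diff[OF fi2 gi2])
        show "2 * ((Astar *v ?a s) \<bullet> (?f s - ?g s)) \<le> (norm (?f s))^2 - (norm (?g s))^2"
          if "s \<in> {0..t}" for s
          using huber_ineq[OF c_pos, of "?f s" "Astar *v ?a s"] psi_b that by blast
      qed
      hence "0 \<le> integral {0..t} (\<lambda>s. (norm (?f s))^2) - integral {0..t} (\<lambda>s. (norm (?g s))^2)"
        using hQ fi2 gi2 by (simp add: integral_diff has_integral_iff)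
      thus ?thesis using trf trg by simp
    qed
  qed
  show ?thesis using g1 g2 g3 by blast
qed

end
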